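(* With the notation of the context, let $N\ge2$ and $Q^o(\alpha_i)=\theta/(N+i-1)$, $1\le i\le N$, where $\theta>0$ is chosen so that $\sum_iQ^o(\alpha_i)=1$. Then $Q^o(\alpha_i)<Q^*(\alpha_i)+\frac{\lg e}{2N^2}$ for all $i$, and $L(Q^o)<H(p)+D(p\|q)+\frac{\lg e}{2N}$.
   Context: Let $\mathcal S$ be a finite alphabet with $|\mathcal S|\ge2$, $p$ a probability distribution on $\mathcal S$ with $p(s)>0$, $N_s$ ($s\in\mathcal S$) positive integers, $N=\sum_sN_s$, $q(s)=N_s/N$, $\lg=\log_2$, and $\kappa_s=\lceil\lg(N/N_s)\rceil$ (so $\kappa_s\ge1$ and $N\le 2^{\kappa_s}N_s<2N$). Let $\alpha_1,\dots,\alpha_N$ be the states. For a probability distribution $Q$ on $\{\alpha_1,\dots,\alpha_N\}$ define $L(Q)=\sum_s p(s)\sum_{i=1}^N Q(\alpha_i)\ell_s(i)$, where $\ell_s(i)=\kappa_s-1$ if $i\le 2^{\kappa_s}N_s-N$ and $\ell_s(i)=\kappa_s$ otherwise. (This is the average code length of the Yokoo–Dubé-type sAEDS, whose state $\alpha_i$ encodes $s$ with $\ell_s(i)$ bits, when $Q$ is its stationary distribution with states indexed in non-increasing order of $Q$.) $Q^*(\alpha_i)=\lg\frac{N+i}{N+i-1}$, which sums to 1. $H(p)=-\sum p\lg p$, $D(p\|q)=\sum p\lg(p/q)$. *)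

theory Defs
  imports Complex_Main
begin

definition lg :: "real \<Rightarrow> real" where "lg x = log 2 x"

definition totalN :: "'s set \<Rightarrow> ('s \<Rightarrow> nat) \<Rightarrow> nat" where
  "totalN S Ns = (\<Sum>s\<in>S. Ns s)"

definition kappa :: "'s set \<Rightarrow> ('s \<Rightarrow> nat) \<Rightarrow> 's \<Rightarrow> nat" where
  "kappa S Ns s = nat \<lceil>lg (real (totalN S Ns) / real (Ns s))\<rceil>"

(* code length of symbol s in state alpha_i *)
definition ell :: "'s set \<Rightarrow> ('s \<Rightarrow> nat) \<Rightarrow> 's \<Rightarrow> nat \<Rightarrow> real" where
  "ell S Ns s i =
     (if real i \<le> 2 ^ kappa S Ns s * real (Ns s) - real (totalN S Ns)
      then real (kappa S Ns s) - 1 else real (kappa S Ns s))"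

(* average code length; Q i is the probability of state alpha_i, i = 1..N *)
definition avgL :: "'s set \<Rightarrow> ('s \<Rightarrow> real) \<Rightarrow> ('s \<Rightarrow> nat) \<Rightarrow> (nat \<Rightarrow> real) \<Rightarrow> real" where
  "avgL S p Ns Q = (\<Sum>s\<in>S. p s * (\<Sum>i=1..totalN S Ns. Q i * ell S Ns s i))"

definition Qstar :: "nat \<Rightarrow> nat \<Rightarrow> real" where
  "Qstar N i = lg ((real N + real i) / (real N + real i - 1))"

definition entropy :: "'s set \<Rightarrow> ('s \<Rightarrow> real) \<Rightarrow> real" where
  "entropy S p = - (\<Sum>s\<in>S. p s * lg (p s))"

definition qdist :: "'s set \<Rightarrow> ('s \<Rightarrow> nat) \<Rightarrow> 's \<Rightarrow> real" where
  "qdist S Ns s = real (Ns s) / real (totalN S Ns)"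

definition KL :: "'s set \<Rightarrow> ('s \<Rightarrow> real) \<Rightarrow> ('s \<Rightarrow> real) \<Rightarrow> real" where
  "KL S p q = (\<Sum>s\<in>S. p s * lg (p s / q s))"

end

theory Submission
  imports Defs
begin

lemma ln_lower: fixes x :: real assumes "0 \<le> x" shows "x - x^2/2 \<le> ln (1 + x)"
proof -
  have "(\<lambda>t. ln (1+t) - t + t^2/2) 0 \<le> (\<lambda>t. ln (1+t) - t + t^2/2) x"
  proof (rule DERIV_nonneg_imp_nondecreasing[OF assms])
    fix t :: real assume t: "0 \<le> t" "t \<le> x"
    have "DERIV (\<lambda>t. ln (1+t) - t + t^2/2) t :> (1/(1+t) - 1 + t)"
      using t by (auto intro!: derivative_eq_intros)
    moreover have "1/(1+t) - 1 + t \<ge> 0"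
    proof -
      have "1/(1+t) - 1 + t = t^2/(1+t)" using t by (simp add: field_simps power2_eq_square)
      thus ?thesis using t by simp
    qed
    ultimately show "\<exists>y. DERIV (\<lambda>t. ln (1+t) - t + t^2/2) t :> y \<and> y \<ge> 0" by blast
  qed
  thus ?thesis by simp
qed

lemma ln_tele: fixes a :: real assumes "a \<ge> 1"
  shows "m \<le> n \<Longrightarrow> (\<Sum>i\<in>{m<..n}. ln ((a + real i) / (a + real i - 1))) = ln ((a + real n) / (a + real m))"
proof (induction n)
  case 0 thus ?case by simp
next
  case (Suc n)
  show ?case
  proof (cases "m = Suc n")
    case True thus ?thesis by simp
  next
    case False
    hence mn: "m \<le> n" using Suc.prems by simp
    have "{m<..Suc n} = insert (Suc n) {m<..n}" using mn by auto
    hence "(\<Sum>i\<in>{m<..Suc n}. ln ((a + real i) / (a + real i - 1)))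
        = ln ((a + real (Suc n)) / (a + real (Suc n) - 1)) + ln ((a + real n) / (a + real m))"
      using Suc.IH[OF mn] by simp
    also have "\<dots> = ln ((a + real (Suc n)) / (a + real (Suc n) - 1) * ((a + real n) / (a + real m)))"
      using assms by (subst ln_mult) (auto simp: field_simps)
    also have "(a + real (Suc n)) / (a + real (Suc n) - 1) * ((a + real n) / (a + real m)) = (a + real (Suc n)) / (a + real m)"
    proof -
      have "a + real n \<noteq> 0" "a + real m \<noteq> 0" using assms by (smt (verit) of_nat_0_le_iff)+
      moreover have "a + real (Suc n) - 1 = a + real n" by simp
      ultimately show ?thesis by simp
    qed
    hence "ln ((a + real (Suc n)) / (a + real (Suc n) - 1) * ((a + real n) / (a + real m))) = ln ((a + real (Suc n)) / (a + real m))"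
      by (rule arg_cong[where f=ln])
    finally show ?thesis .
  qed
qed

lemma lg_e: "lg (exp 1) = 1 / ln 2" by (simp add: lg_def log_def)

lemma Qstar_ln: "Qstar N i = ln ((real N + real i) / (real N + real i - 1)) / ln 2"
  by (simp add: Qstar_def lg_def log_def)

lemma theta_bound:
  fixes \<theta> :: real and N :: nat
  assumes "N \<ge> 1" "\<theta> > 0" "(\<Sum>i=1..N. \<theta> / (real N + real i - 1)) = 1"
  shows "\<theta> < 1 / ln 2"
proof -
  have "(\<Sum>i=1..N. ln ((real N + real i) / (real N + real i - 1))) < (\<Sum>i=1..N. 1 / (real N + real i - 1))"
  proof (rule sum_strict_mono)
    fix i assume i: "i \<in> {1..N}"
    hence pos: "real N + real i - 1 > 0" using assms by auto
    have "(real N + real i) / (real N + real i - 1) = 1 + 1 / (real N + real i - 1)"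
      using pos by (simp add: field_simps)
    thus "ln ((real N + real i) / (real N + real i - 1)) < 1 / (real N + real i - 1)"
      using ln_add_one_self_less_self[of "1 / (real N + real i - 1)"] pos by simp
  qed (use assms in auto)
  moreover have "(\<Sum>i=1..N. ln ((real N + real i) / (real N + real i - 1))) = ln 2"
  proof -
    have "{1..N} = {0<..N}" by auto
    hence "(\<Sum>i=1..N. ln ((real N + real i) / (real N + real i - 1))) = ln ((real N + real N) / (real N + real 0))"
      using ln_tele[of "real N" 0 N] assms by simp
    also have "\<dots> = ln 2" using assms by simp
    finally show ?thesis .
  qed
  moreover have "\<theta> * (\<Sum>i=1..N. 1 / (real N + real i - 1)) = 1"
    using assms(3) by (simp add: sum_distrib_left)
  ultimately have "\<theta> * ln 2 < 1" using assms(2)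
    by (metis mult_strict_left_mono)
  thus ?thesis by (simp add: field_simps)
qed

lemma part1:
  fixes \<theta> :: real and N i :: nat
  assumes "N \<ge> 1" "\<theta> > 0" "(\<Sum>i=1..N. \<theta> / (real N + real i - 1)) = 1" "i \<in> {1..N}"
  shows "\<theta> / (real N + real i - 1) < Qstar N i + lg (exp 1) / (2 * real N ^ 2)"
proof -
  define m where "m = real N + real i - 1"
  have m: "m \<ge> real N" "real N \<ge> 1" using assms by (auto simp: m_def)
  have mpos: "m > 0" using m by simp
  have ln2: "ln (2::real) > 0" by simp
  have "\<theta> / m < (1 / ln 2) / m" using theta_bound[OF assms(1-3)] mpos
    by (metis divide_strict_right_mono)
  also have "(1 / ln 2) / m = (1/m - (1/m)^2/2) / ln 2 + (1/m)^2/2 / ln 2"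
    by (simp add: field_simps)
  also have "\<dots> \<le> ln (1 + 1/m) / ln 2 + (1/real N)^2/2 / ln 2"
  proof (rule add_mono)
    show "(1/m - (1/m)^2/2) / ln 2 \<le> ln (1 + 1/m) / ln 2"
      using ln_lower[of "1/m"] mpos ln2 by (simp add: divide_right_mono)
    have "1/m \<le> 1/real N" using m by (simp add: frac_le)
    hence "(1/m)^2 \<le> (1/real N)^2" using mpos by (simp add: power_mono)
    thus "(1/m)^2/2 / ln 2 \<le> (1/real N)^2/2 / ln 2" using ln2 by (simp add: divide_right_mono)
  qed
  also have "ln (1 + 1/m) / ln 2 = Qstar N i"
  proof -
    have "1 + 1/m = (real N + real i) / (real N + real i - 1)" using mpos by (simp add: m_def field_simps)
    thus ?thesis by (simp add: Qstar_ln)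
  qed
  also have "(1/real N)^2/2 / ln 2 = lg (exp 1) / (2 * real N ^ 2)"
    by (simp add: lg_e field_simps power2_eq_square)
  finally show ?thesis by (simp add: m_def)
qed

lemma per_s:
  fixes S :: "'s set" and Ns :: "'s \<Rightarrow> nat" and \<theta> :: real
  assumes fin: "finite S" and sS: "s \<in> S" and Npos: "\<forall>s\<in>S. Ns s > 0"
    and N1: "totalN S Ns \<ge> 1" and th: "\<theta> > 0"
    and sum1: "(\<Sum>i=1..totalN S Ns. \<theta> / (real (totalN S Ns) + real i - 1)) = 1"
  shows "(\<Sum>i=1..totalN S Ns. \<theta> / (real (totalN S Ns) + real i - 1) * ell S Ns s i)
     < lg (real (totalN S Ns) / real (Ns s)) + lg (exp 1) / (2 * real (totalN S Ns))"
proof -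
  define N where "N = totalN S Ns"
  define Q where "Q = (\<lambda>i::nat. \<theta> / (real N + real i - 1))"
  define l where "l = lg (real N / real (Ns s))"
  define k where "k = kappa S Ns s"
  have ns: "Ns s > 0" using Npos sS by auto
  have nsN: "Ns s \<le> N" unfolding N_def totalN_def using fin sS by (simp add: member_le_sum)
  have N1': "N \<ge> 1" using N1 N_def by simp
  have l0: "l \<ge> 0" unfolding l_def lg_def using ns nsN by simp
  have kdef: "k = nat \<lceil>l\<rceil>" by (simp add: k_def kappa_def l_def N_def)
  have kreal: "real k = of_int \<lceil>l\<rceil>" using l0 kdef by simp
  have kl: "real k \<ge> l" "real k < l + 1" using kreal by linarith+
  have p2l: "2 powr l = real N / real (Ns s)" unfolding l_def lg_def using ns nsN by simp
  have p2k: "(2::real) ^ k = 2 powr real k" by (simp add: powr_realpow)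
  have lo: "(2::real) ^ k \<ge> real N / real (Ns s)"
    using p2k p2l kl(1) by (metis powr_mono one_le_numeral)
  have hi: "(2::real) ^ k < 2 * (real N / real (Ns s))"
  proof -
    have "2 powr real k < 2 powr (l + 1)" using kl(2) by (simp add: powr_less_mono)
    also have "2 powr (l+1) = 2 * (real N / real (Ns s))" using p2l by (simp add: powr_add)
    finally show ?thesis using p2k by simp
  qed
  define K where "K = 2 ^ k * Ns s"
  have KN: "real K \<ge> real N" using lo ns by (simp add: K_def field_simps)
  have K2N: "real K < 2 * real N" using hi ns by (simp add: K_def field_simps)
  define M where "M = K - N"
  have MN: "M < N" "real M = real K - real N" using KN K2N by (auto simp: M_def of_nat_diff)
  have ellM: "ell S Ns s i = (if i \<le> M then real k - 1 else real k)" for i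
  proof -
    have "(real i \<le> 2 ^ kappa S Ns s * real (Ns s) - real (totalN S Ns)) = (i \<le> M)"
    proof -
      have "2 ^ kappa S Ns s * real (Ns s) - real (totalN S Ns) = real M"
        using MN(2) by (simp add: K_def k_def N_def)
      thus ?thesis by simp
    qed
    thus ?thesis by (simp add: ell_def k_def)
  qed
  have split: "{1..N} = {1..M} \<union> {M<..N}" using MN by auto
  have disj: "{1..M} \<inter> {M<..N} = {}" by auto
  define A where "A = (\<Sum>i=1..M. Q i)"
  define B where "B = (\<Sum>i\<in>{M<..N}. Q i)"
  have AB: "A + B = 1" using sum1 unfolding A_def B_def Q_def N_def[symmetric]
    by (subst (asm) split, subst (asm) sum.union_disjoint) (use disj in auto)
  have "(\<Sum>i=1..N. Q i * ell S Ns s i) = (\<Sum>i=1..M. Q i * ell S Ns s i) + (\<Sum>i\<in>{M<..N}. Q i * ell S Ns s i)"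
    by (subst split, subst sum.union_disjoint) (use disj in auto)
  also have "(\<Sum>i=1..M. Q i * ell S Ns s i) = A * (real k - 1)"
    unfolding A_def sum_distrib_right by (rule sum.cong) (auto simp: ellM)
  also have "(\<Sum>i\<in>{M<..N}. Q i * ell S Ns s i) = B * real k"
    unfolding B_def sum_distrib_right by (rule sum.cong) (auto simp: ellM)
  also have "A * (real k - 1) + B * real k = real k - 1 + B"
  proof -
    have "A * (real k - 1) + B * real k = (A + B) * real k - A" by (simp add: algebra_simps)
    thus ?thesis using AB by (simp add: algebra_simps)
  qed
  finally have L: "(\<Sum>i=1..N. Q i * ell S Ns s i) = real k - 1 + B" .
  have tele: "(\<Sum>i\<in>{M<..N}. Qstar N i) = lg (2 * real N / real K)"
  proof -
    have "(\<Sum>i\<in>{M<..N}. Qstar N i) = (\<Sum>i\<in>{M<..N}. ln ((real N + real i) / (real N + real i - 1))) / ln 2"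
      by (simp add: Qstar_ln sum_divide_distrib)
    also have "\<dots> = ln ((real N + real N) / (real N + real M)) / ln 2"
      using ln_tele[of "real N" M N] N1' MN by simp
    also have "real N + real M = real K" using MN by simp
    finally show ?thesis by (simp add: lg_def log_def)
  qed
  have lgK: "lg (2 * real N / real K) = 1 + l - real k"
  proof -
    have "lg (2 * real N / real K) = lg 2 + lg (real N) - (lg (2^k) + lg (real (Ns s)))"
      using ns N1' by (simp add: lg_def K_def log_mult log_divide)
    also have "lg (2^k) = real k" by (simp add: lg_def)
    also have "l = lg (real N) - lg (real (Ns s))" using ns N1' by (simp add: l_def lg_def log_divide)
    ultimately show ?thesis by (simp add: lg_def)
  qed
  have Bb: "B < (\<Sum>i\<in>{M<..N}. Qstar N i) + real (N - M) * (lg (exp 1) / (2 * real N ^ 2))"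
  proof -
    have "B < (\<Sum>i\<in>{M<..N}. Qstar N i + lg (exp 1) / (2 * real N ^ 2))"
      unfolding B_def Q_def
    proof (rule sum_strict_mono)
      fix i assume "i \<in> {M<..N}"
      hence "i \<in> {1..N}" by auto
      thus "\<theta> / (real N + real i - 1) < Qstar N i + lg (exp 1) / (2 * real N ^ 2)"
        using part1[OF N1' th] sum1 N_def by simp
    qed (use MN in auto)
    thus ?thesis by (simp add: sum.distrib)
  qed
  have c0: "lg (exp 1) / (2 * real N ^ 2) > 0" using N1' by (simp add: lg_e)
  have "real (N - M) * (lg (exp 1) / (2 * real N ^ 2)) \<le> real N * (lg (exp 1) / (2 * real N ^ 2))"
    using c0 by (intro mult_right_mono) auto
  also have "\<dots> = lg (exp 1) / (2 * real N)" using N1' by (simp add: power2_eq_square field_simps)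
  finally have "B < 1 + l - real k + lg (exp 1) / (2 * real N)" using Bb tele lgK by linarith
  hence "(\<Sum>i=1..N. Q i * ell S Ns s i) < l + lg (exp 1) / (2 * real N)" using L by linarith
  thus ?thesis by (simp add: Q_def N_def l_def)
qed

theorem lemma3:
  fixes S :: "'s set" and p :: "'s \<Rightarrow> real" and Ns :: "'s \<Rightarrow> nat" and \<theta> :: real
  assumes "finite S" and "card S \<ge> 2"
    and "\<forall>s\<in>S. p s > 0" and "(\<Sum>s\<in>S. p s) = 1"
    and "\<forall>s\<in>S. Ns s > 0"
    and "totalN S Ns \<ge> 2"
    and "\<theta> > 0"
    and "(\<Sum>i=1..totalN S Ns. \<theta> / (real (totalN S Ns) + real i - 1)) = 1"
  shows "(\<forall>i\<in>{1..totalN S Ns}.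
            \<theta> / (real (totalN S Ns) + real i - 1)
              < Qstar (totalN S Ns) i + lg (exp 1) / (2 * real (totalN S Ns) ^ 2))
       \<and> avgL S p Ns (\<lambda>i. \<theta> / (real (totalN S Ns) + real i - 1))
           < entropy S p + KL S p (qdist S Ns) + lg (exp 1) / (2 * real (totalN S Ns))"
proof -
  define N where "N = totalN S Ns"
  have N1: "totalN S Ns \<ge> 1" using assms(6) by simp
  have P1: "\<forall>i\<in>{1..totalN S Ns}. \<theta> / (real (totalN S Ns) + real i - 1)
              < Qstar (totalN S Ns) i + lg (exp 1) / (2 * real (totalN S Ns) ^ 2)"
    using part1[OF N1 assms(7,8)] by blast
  define c where "c = lg (exp 1) / (2 * real (totalN S Ns))"
  have ne: "S \<noteq> {}" using assms(2) by auto
  have "avgL S p Ns (\<lambda>i. \<theta> / (real (totalN S Ns) + real i - 1))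
      < (\<Sum>s\<in>S. p s * (lg (real (totalN S Ns) / real (Ns s)) + c))"
    unfolding avgL_def
  proof (rule sum_strict_mono[OF assms(1) ne])
    fix s assume s: "s \<in> S"
    show "p s * (\<Sum>i=1..totalN S Ns. \<theta> / (real (totalN S Ns) + real i - 1) * ell S Ns s i)
        < p s * (lg (real (totalN S Ns) / real (Ns s)) + c)"
      using per_s[OF assms(1) s assms(5) N1 assms(7,8)] assms(3) s unfolding c_def
      by (intro mult_strict_left_mono) auto
  qed
  also have "\<dots> = (\<Sum>s\<in>S. p s * lg (real (totalN S Ns) / real (Ns s))) + c"
    using assms(4) by (simp add: distrib_left sum.distrib sum_distrib_right[symmetric])
  also have "(\<Sum>s\<in>S. p s * lg (real (totalN S Ns) / real (Ns s))) = entropy S p + KL S p (qdist S Ns)"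
  proof -
    have "entropy S p + KL S p (qdist S Ns) = (\<Sum>s\<in>S. p s * (lg (p s / qdist S Ns s) - lg (p s)))"
      by (simp add: entropy_def KL_def right_diff_distrib sum_subtractf)
    also have "\<dots> = (\<Sum>s\<in>S. p s * lg (real (totalN S Ns) / real (Ns s)))"
    proof (rule sum.cong[OF refl])
      fix s assume s: "s \<in> S"
      have ps: "p s > 0" using assms(3) s by auto
      have ns: "Ns s > 0" using assms(5) s by auto
      have "lg (p s / qdist S Ns s) - lg (p s) = lg (real (totalN S Ns) / real (Ns s))"
        using ps ns N1 by (simp add: lg_def qdist_def log_divide log_mult)
      thus "p s * (lg (p s / qdist S Ns s) - lg (p s)) = p s * lg (real (totalN S Ns) / real (Ns s))" by simp
    qed
    finally show ?thesis by simp
  qed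
  finally show ?thesis using P1 unfolding c_def by simp
qed

end
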